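(* Let $G$ be a non-complete double-critical $7$-chromatic graph and let $x$ be a vertex of degree $9$ in $G$. Then the complement $\overline{G_x}$ does not contain $K_4^-$ (the complete graph on $4$ vertices minus one edge) as a subgraph.
   Context: All graphs are finite and simple. A graph $G$ is (vertex-)critical if $\chi(G-v)<\chi(G)$ for every vertex $v\in V(G)$. A critical graph $G$ is double-critical if $\chi(G-x-y)\le\chi(G)-2$ for every edge $xy\in E(G)$. For a vertex $x$, $G_x:=G[N(x)]$ denotes the subgraph induced by the neighbourhood of $x$, and $\overline{G_x}$ its complement. *)

theory Defs
  imports Main
begin

text \<open>A finite simple graph is given by a finite vertex set V and a symmetric,
irreflexive adjacency relation E (only its restriction to V matters).
Subgraphs G - v, G - x - y are the induced subgraphs on V minus those vertices.\<close>

definition simple_graph :: "'a set \<Rightarrow> ('a \<Rightarrow> 'a \<Rightarrow> bool) \<Rightarrow> bool" where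
  "simple_graph V E \<longleftrightarrow> finite V \<and> (\<forall>u v. E u v \<longrightarrow> E v u) \<and> (\<forall>v. \<not> E v v)"

definition colorable :: "('a \<Rightarrow> 'a \<Rightarrow> bool) \<Rightarrow> 'a set \<Rightarrow> nat \<Rightarrow> bool" where
  "colorable E S k \<longleftrightarrow> (\<exists>c :: 'a \<Rightarrow> nat. (\<forall>v\<in>S. c v < k) \<and>
      (\<forall>u\<in>S. \<forall>v\<in>S. E u v \<longrightarrow> c u \<noteq> c v))"

definition chi :: "('a \<Rightarrow> 'a \<Rightarrow> bool) \<Rightarrow> 'a set \<Rightarrow> nat" where
  "chi E S = (LEAST k. colorable E S k)"

definition vertex_critical :: "'a set \<Rightarrow> ('a \<Rightarrow> 'a \<Rightarrow> bool) \<Rightarrow> bool" where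
  "vertex_critical V E \<longleftrightarrow> (\<forall>v\<in>V. chi E (V - {v}) < chi E V)"

definition double_critical :: "'a set \<Rightarrow> ('a \<Rightarrow> 'a \<Rightarrow> bool) \<Rightarrow> bool" where
  "double_critical V E \<longleftrightarrow> vertex_critical V E \<and>
     (\<forall>x\<in>V. \<forall>y\<in>V. E x y \<longrightarrow> chi E (V - {x, y}) + 2 \<le> chi E V)"

definition complete_graph :: "'a set \<Rightarrow> ('a \<Rightarrow> 'a \<Rightarrow> bool) \<Rightarrow> bool" where
  "complete_graph V E \<longleftrightarrow> (\<forall>u\<in>V. \<forall>v\<in>V. u \<noteq> v \<longrightarrow> E u v)"

definition nbhd :: "'a set \<Rightarrow> ('a \<Rightarrow> 'a \<Rightarrow> bool) \<Rightarrow> 'a \<Rightarrow> 'a set" where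
  "nbhd V E x = {y\<in>V. E x y}"

definition degree :: "'a set \<Rightarrow> ('a \<Rightarrow> 'a \<Rightarrow> bool) \<Rightarrow> 'a \<Rightarrow> nat" where
  "degree V E x = card (nbhd V E x)"

definition contains_K4_minus :: "'a set \<Rightarrow> ('a \<Rightarrow> 'a \<Rightarrow> bool) \<Rightarrow> bool" where
  "contains_K4_minus S F \<longleftrightarrow> (\<exists>a\<in>S. \<exists>b\<in>S. \<exists>c\<in>S. \<exists>d\<in>S. distinct [a, b, c, d] \<and>
      F a b \<and> F a c \<and> F a d \<and> F b c \<and> F b d)"

definition compl_adj :: "('a \<Rightarrow> 'a \<Rightarrow> bool) \<Rightarrow> 'a \<Rightarrow> 'a \<Rightarrow> bool" where
  "compl_adj E u v \<longleftrightarrow> u \<noteq> v \<and> \<not> E u v"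

end

theory Submission
  imports Defs
begin

lemma colorable_mono: "colorable E S k \<Longrightarrow> k \<le> k' \<Longrightarrow> colorable E S k'"
  unfolding colorable_def by (meson less_le_trans not_le)

lemma colorable_card:
  assumes "finite S" "\<forall>v. \<not> E v v"
  shows "colorable E S (card S)"
proof -
  obtain h where h: "bij_betw h S {0..<card S}" using ex_bij_betw_finite_nat[OF assms(1)] by blast
  show ?thesis unfolding colorable_def
    apply (rule exI[of _ h])
    using h assms(2) unfolding bij_betw_def inj_on_def by auto
qed

lemma chi_colorable:
  assumes "finite S" "\<forall>v. \<not> E v v"
  shows "colorable E S (chi E S)"
  unfolding chi_def using colorable_card[of S E, OF assms] by (rule LeastI)

lemma chi_le: "colorable E S k \<Longrightarrow> chi E S \<le> k"
  unfolding chi_def by (rule Least_le)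

lemma key:
  assumes sg: "simple_graph V E" and nc: "\<not> colorable E V 6"
    and xV: "x \<in> V" and yV: "y \<in> V" and xy: "E x y"
    and phi: "\<forall>v\<in>V-{x,y}. \<phi> v < 5" "\<forall>u\<in>V-{x,y}. \<forall>v\<in>V-{x,y}. E u v \<longrightarrow> \<phi> u \<noteq> \<phi> v"
    and i: "(i::nat) < 5"
  shows "\<exists>v\<in>V-{x,y}. E x v \<and> E y v \<and> \<phi> v = i"
proof (rule ccontr)
  assume no: "\<not> ?thesis"
  have sym: "\<And>u v. E u v \<Longrightarrow> E v u" and irr: "\<And>v. \<not> E v v" using sg unfolding simple_graph_def by auto
  have xney: "x \<noteq> y" using xy irr by auto
  define c where "c = (\<lambda>v. if v = x then i else if v = y then 5
     else if \<phi> v = i \<and> E x v then 5 else \<phi> v)"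
  have "colorable E V 6" unfolding colorable_def
  proof (intro exI[of _ c] conjI ballI impI)
    fix v assume vV: "v \<in> V"
    have "v \<noteq> x \<Longrightarrow> v \<noteq> y \<Longrightarrow> \<phi> v < 5" using phi(1) vV by auto
    thus "c v < 6" using i unfolding c_def by auto
  next
    fix u v assume uV: "u \<in> V" and vV: "v \<in> V" and uv: "E u v"
    show "c u \<noteq> c v"
    proof -
      have cx: "c x = i" and cy: "c y = 5" using xney unfolding c_def by auto
      have A: "\<And>w. w \<in> V-{x,y} \<Longrightarrow> E x w \<Longrightarrow> c w \<noteq> i"
        using i unfolding c_def by auto
      have B: "c w \<noteq> 5" if w: "w \<in> V-{x,y}" and yw: "E y w" for w
      proof -
        have "\<phi> w < 5" using phi(1) w by auto
        moreover have "\<not> (\<phi> w = i \<and> E x w)" using no w yw by blast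
        ultimately show ?thesis using w unfolding c_def by auto
      qed
      have C: "\<And>w w'. w \<in> V-{x,y} \<Longrightarrow> w' \<in> V-{x,y} \<Longrightarrow> E w w' \<Longrightarrow> c w \<noteq> c w'"
      proof -
        fix w w' assume w: "w \<in> V-{x,y}" and w': "w' \<in> V-{x,y}" and ww: "E w w'"
        have "\<phi> w \<noteq> \<phi> w'" using phi(2) w w' ww by blast
        moreover have "\<phi> w < 5" "\<phi> w' < 5" using phi(1) w w' by auto
        ultimately show "c w \<noteq> c w'" using w w' unfolding c_def by auto
      qed
      show ?thesis
      proof (cases "u = x")
        case True
        hence "v \<noteq> x" using uv irr by auto
        then show ?thesis using True A[of v] uv vV i xney unfolding c_def by (cases "v = y") auto
      next
        case False
        note ux = False
        show ?thesis
        proof (cases "u = y")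
          case True
          hence "v \<noteq> y" using uv irr by auto
          then show ?thesis using True B[of v] uv vV i xney ux unfolding c_def by (cases "v = x") auto
        next
          case False
          show ?thesis
          proof (cases "v = x")
            case True
            then show ?thesis using A[of u] sym[OF uv] uV ux False cx by auto
          next
            case vx: False
            show ?thesis
            proof (cases "v = y")
              case True
              then show ?thesis using B[of u] sym[OF uv] uV ux False cy by auto
            next
              case False
              then show ?thesis using C[of u v] uV vV ux vx \<open>u \<noteq> y\<close> uv by blast
            qed
          qed
        qed
      qed
    qed
  qed
  thus False using nc by blast
qed

theorem proposition26:
  fixes V :: "'a set" and E :: "'a \<Rightarrow> 'a \<Rightarrow> bool" and x :: 'a
  assumes "simple_graph V E"
    and "double_critical V E"
    and "chi E V = 7"
    and "\<not> complete_graph V E"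
    and "x \<in> V"
    and "degree V E x = 9"
  shows "\<not> contains_K4_minus (nbhd V E x) (compl_adj E)"
proof
  assume "contains_K4_minus (nbhd V E x) (compl_adj E)"
  then obtain a b c d where abcd: "a \<in> nbhd V E x" "b \<in> nbhd V E x" "c \<in> nbhd V E x" "d \<in> nbhd V E x"
    "distinct [a,b,c,d]" "compl_adj E a b" "compl_adj E a c" "compl_adj E a d"
    "compl_adj E b c" "compl_adj E b d"
    unfolding contains_K4_minus_def by blast
  have sg: "simple_graph V E" by fact
  have fin: "finite V" and sym: "\<And>u v. E u v \<Longrightarrow> E v u" and irr: "\<forall>v. \<not> E v v"
    using sg unfolding simple_graph_def by auto
  have nc: "\<not> colorable E V 6" using chi_le[of E V 6] assms(3) by auto
  define S where "S = nbhd V E x"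
  have finS: "finite S" using fin unfolding S_def nbhd_def by auto
  have cS: "card S = 9" using assms(6) unfolding S_def degree_def by simp
  have col5: "\<exists>\<phi>. (\<forall>v\<in>V-{x,y}. \<phi> v < (5::nat)) \<and> (\<forall>u\<in>V-{x,y}. \<forall>v\<in>V-{x,y}. E u v \<longrightarrow> \<phi> u \<noteq> \<phi> v)"
    if "y \<in> S" for y
  proof -
    have yV: "y \<in> V" and xy: "E x y" using that unfolding S_def nbhd_def by auto
    have "chi E (V - {x,y}) + 2 \<le> 7" using assms(2,3,5) yV xy unfolding double_critical_def by auto
    moreover have "colorable E (V-{x,y}) (chi E (V-{x,y}))" using chi_colorable fin irr by blast
    ultimately have "colorable E (V-{x,y}) 5" using colorable_mono by fastforce
    thus ?thesis unfolding colorable_def by blast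
  qed
  have allc: "\<exists>v\<in>V-{x,y}. E x v \<and> E y v \<and> \<phi> v = i"
    if "y \<in> S" "\<forall>v\<in>V-{x,y}. \<phi> v < (5::nat)" "\<forall>u\<in>V-{x,y}. \<forall>v\<in>V-{x,y}. E u v \<longrightarrow> \<phi> u \<noteq> \<phi> v" "i < 5"
    for y \<phi> i
    using key[OF sg nc assms(5) _ _ that(2,3,4)] that(1) unfolding S_def nbhd_def by auto
  define R where "R = S - {a,b,c,d}"
  have cR: "card R = 5" using cS abcd(1-5) finS unfolding R_def S_def
    by (simp add: card_Diff_subset)
  have Tsub: "{v\<in>S. E y v} \<subseteq> R" if "y \<in> {a,b}" for y
    using that abcd(5-10) irr sym unfolding R_def compl_adj_def by auto
  obtain \<psi> where psi: "\<forall>v\<in>V-{x,b}. \<psi> v < (5::nat)" "\<forall>u\<in>V-{x,b}. \<forall>v\<in>V-{x,b}. E u v \<longrightarrow> \<psi> u \<noteq> \<psi> v"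
    using col5[OF abcd(2)[folded S_def]] by blast
  have "{0..<5} \<subseteq> \<psi> ` {v\<in>S. E b v}"
  proof
    fix i assume "i \<in> {0..<(5::nat)}"
    then obtain v where "v\<in>V-{x,b}" "E x v" "E b v" "\<psi> v = i"
      using allc[OF abcd(2)[folded S_def] psi] by auto
    thus "i \<in> \<psi> ` {v\<in>S. E b v}" unfolding S_def nbhd_def by auto
  qed
  hence "5 \<le> card (\<psi> ` {v\<in>S. E b v})" using card_mono[of "\<psi> ` {v\<in>S. E b v}" "{0..<5}"] finS by auto
  also have "\<dots> \<le> card {v\<in>S. E b v}" using card_image_le[of "{v\<in>S. E b v}" \<psi>] finS by simp
  finally have "card R \<le> card {v\<in>S. E b v}" using cR by simp
  hence TbR: "{v\<in>S. E b v} = R" using Tsub[of b] card_seteq[of R] finS unfolding R_def by auto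
  obtain \<phi> where phi: "\<forall>v\<in>V-{x,a}. \<phi> v < (5::nat)" "\<forall>u\<in>V-{x,a}. \<forall>v\<in>V-{x,a}. E u v \<longrightarrow> \<phi> u \<noteq> \<phi> v"
    using col5[OF abcd(1)[folded S_def]] by blast
  have bV: "b \<in> V - {x,a}" using abcd(2,5) irr unfolding nbhd_def by auto
  then obtain v where v: "v\<in>V-{x,a}" "E x v" "E a v" "\<phi> v = \<phi> b"
    using allc[OF abcd(1)[folded S_def] phi, of "\<phi> b"] phi(1) by auto
  have "v \<in> {v\<in>S. E a v}" using v unfolding S_def nbhd_def by auto
  hence "E b v" using Tsub[of a] TbR by auto
  thus False using phi(2) bV v(1,4) by metis
qed

end
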